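(* Let $T$ be a $k$-IET on $I=[\ell,r)$ over the ordered alphabet $\mathcal{A}=\{a_1<\dots<a_k\}$ with partition $(I_a)_{a\in\mathcal{A}}$ and permutation $\pi\in S_{\mathcal{A}}$. Suppose $|I_{a_1}|=|I_{\pi(a_1)}|$ and $a_1\neq\pi(a_1)$. Let $I'=[\ell+|I_{a_1}|,r)$, $\mathcal{A}'=\mathcal{A}\setminus\{a_1\}$ (with the induced order) and define $\pi'\in S_{\mathcal{A}'}$ by $\pi'(a)=\pi(a_1)$ if $a=\pi^{-1}(a_1)$ and $\pi'(a)=\pi(a)$ otherwise. Then the map induced by $T$ on $I'$ (the first-return map $x\mapsto T^{\nu(x)}(x)$, $\nu(x)=\min\{n>0:T^n(x)\in I'\}$), denoted $\lambda(T)$, is the $(k-1)$-IET on $I'$ over $\mathcal{A}'$ with partition $(I_a)_{a\in\mathcal{A}'}$ and permutation $\pi'$. Moreover, for every $x\in I'$, $\Omega_T(x)=\varphi(\Omega_{\lambda(T)}(x))$, where $\varphi:\mathcal{A}'^*\to\mathcal{A}^*$ (extended to infinite words) is the morphism with $\varphi(\pi(a_1))=\pi(a_1)a_1$ and $\varphi(c)=c$ for every letter $c\neq\pi(a_1)$.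
   Context: A $k$-IET $T$ on $I=[\ell,r)$ over $\mathcal{A}$ is given by a partition of $I$ into left-closed right-open intervals $(I_a)_{a\in\mathcal{A}}$ of positive length, with $I_a$ to the left of $I_b$ whenever $a<b$, and a permutation $\pi$ of $\mathcal{A}$; $T(x)=x+\tau_a$ for $x\in I_a$ where $\tau_a=\sum_{b:\,\pi^{-1}(b)<\pi^{-1}(a)}|I_b|-\sum_{b<a}|I_b|$ (so the image intervals $T(I_{\pi(a_1)}),\dots,T(I_{\pi(a_k)})$ appear from left to right). The trajectory of $x$ under an IET $S$ over an alphabet $\mathcal{C}$ with partition $(J_c)$ is $\Omega_S(x)=w_0w_1\cdots$ with $w_i=c$ iff $S^i(x)\in J_c$. *)

theory Defs
  imports Complex_Main
begin

text \<open>An IET is given by data (A, len, p, l): a finite nonempty linearly ordered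
alphabet A, positive lengths len a of the subintervals I_a, a permutation p of A,
and the left endpoint l.\<close>

definition iet_data :: "'a::linorder set \<Rightarrow> ('a \<Rightarrow> real) \<Rightarrow> ('a \<Rightarrow> 'a) \<Rightarrow> bool" where
  "iet_data A len p \<longleftrightarrow> finite A \<and> A \<noteq> {} \<and> (\<forall>a\<in>A. len a > 0) \<and> bij_betw p A A"

definition iet_right :: "'a::linorder set \<Rightarrow> ('a \<Rightarrow> real) \<Rightarrow> real \<Rightarrow> real" where
  "iet_right A len l = l + sum len A"

definition subint :: "'a::linorder set \<Rightarrow> ('a \<Rightarrow> real) \<Rightarrow> real \<Rightarrow> 'a \<Rightarrow> real set" where
  "subint A len l a = {l + sum len {b\<in>A. b < a} ..< l + sum len {b\<in>A. b < a} + len a}"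

definition tau :: "'a::linorder set \<Rightarrow> ('a \<Rightarrow> real) \<Rightarrow> ('a \<Rightarrow> 'a) \<Rightarrow> 'a \<Rightarrow> real" where
  "tau A len p a = sum len {b\<in>A. inv_into A p b < inv_into A p a} - sum len {b\<in>A. b < a}"

text \<open>The IET map T (identity outside the interval, irrelevant there).\<close>
definition iet :: "'a::linorder set \<Rightarrow> ('a \<Rightarrow> real) \<Rightarrow> ('a \<Rightarrow> 'a) \<Rightarrow> real \<Rightarrow> real \<Rightarrow> real" where
  "iet A len p l x =
     (if \<exists>a\<in>A. x \<in> subint A len l a
      then x + tau A len p (THE a. a \<in> A \<and> x \<in> subint A len l a)
      else x)"

definition traj :: "'a::linorder set \<Rightarrow> ('a \<Rightarrow> real) \<Rightarrow> ('a \<Rightarrow> 'a) \<Rightarrow> real \<Rightarrow> real \<Rightarrow> nat \<Rightarrow> 'a" where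
  "traj A len p l x i = (THE c. c \<in> A \<and> (iet A len p l ^^ i) x \<in> subint A len l c)"

definition return_time :: "(real \<Rightarrow> real) \<Rightarrow> real set \<Rightarrow> real \<Rightarrow> nat" where
  "return_time T J x = (LEAST n. n > 0 \<and> (T ^^ n) x \<in> J)"

definition induced_map :: "(real \<Rightarrow> real) \<Rightarrow> real set \<Rightarrow> real \<Rightarrow> real" where
  "induced_map T J x = (T ^^ return_time T J x) x"

text \<open>Extension of a non-erasing morphism f to infinite words: the n-th letter of
f(w) is the n-th letter of f(w_0) ... f(w_n) (which has length > n).\<close>
definition morph_inf :: "('a \<Rightarrow> 'b list) \<Rightarrow> (nat \<Rightarrow> 'a) \<Rightarrow> nat \<Rightarrow> 'b" where
  "morph_inf f w n = concat (map (f \<circ> w) [0..<Suc n]) ! n"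

end

theory Submission
  imports Defs
begin


lemma lt_step:
  fixes len :: "'a::linorder \<Rightarrow> real"
  assumes "finite A" "\<forall>a\<in>A. len a > 0" "a\<in>A" "b\<in>A" "a<b"
  shows "sum len {x\<in>A. x<a} + len a \<le> sum len {x\<in>A. x<b}"
proof -
  have "sum len {x\<in>A. x<a} + len a = sum len (insert a {x\<in>A. x<a})"
    using assms(1) by (subst sum.insert) auto
  also have "\<dots> \<le> sum len {x\<in>A. x<b}"
    by (rule sum_mono2) (use assms in auto)
  finally show ?thesis .
qed

lemma subint_disj:
  assumes "finite A" "\<forall>a\<in>A. len a > 0" "a\<in>A" "b\<in>A"
    "x \<in> subint A len l a" "x \<in> subint A len l b"
  shows "a = b"
proof (rule ccontr)
  assume "a \<noteq> b"
  then consider "a < b" | "b < a" by fastforce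
  then show False
  proof cases
    case 1
    from lt_step[OF assms(1-4) 1] assms(5,6) show False unfolding subint_def by auto
  next
    case 2
    from lt_step[OF assms(1,2,4,3) 2] assms(5,6) show False unfolding subint_def by auto
  qed
qed

lemma the_letter:
  assumes "finite A" "\<forall>a\<in>A. len a > 0" "a\<in>A" "x \<in> subint A len l a"
  shows "(THE b. b\<in>A \<and> x \<in> subint A len l b) = a"
  by (rule the_equality) (use assms subint_disj[OF assms(1,2)] in auto)

lemma iet_eq:
  assumes "finite A" "\<forall>a\<in>A. len a > 0" "a\<in>A" "x \<in> subint A len l a"
  shows "iet A len p l x = x + tau A len p a"
  unfolding iet_def using assms the_letter[OF assms] by auto

lemma subint_cover:
  fixes len :: "'a::linorder \<Rightarrow> real"
  assumes fin: "finite A" and ne: "A \<noteq> {}" and pos: "\<forall>a\<in>A. len a > 0"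
    and x: "l \<le> x" "x < l + sum len A"
  shows "\<exists>a\<in>A. x \<in> subint A len l (a::'a::linorder)"
proof -
  define B where "B = {a\<in>A. l + sum len {b\<in>A. b<a} \<le> x}"
  have e: "{b\<in>A. b < Min A} = {}" using fin ne by auto
  have "sum len {b\<in>A. b < Min A} = 0" by (simp only: e sum.empty)
  moreover have "Min A \<in> A" using fin ne by auto
  ultimately have "Min A \<in> B" using x unfolding B_def by simp
  hence Bne: "B \<noteq> {}" by auto
  have Bfin: "finite B" using fin unfolding B_def by auto
  define a where "a = Max B"
  have aB: "a \<in> B" using Bne Bfin a_def by auto
  hence aA: "a \<in> A" and ax: "l + sum len {b\<in>A. b<a} \<le> x" unfolding B_def by auto
  have "x < l + sum len {b\<in>A. b<a} + len a"
  proof (rule ccontr)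
    assume H: "\<not> ?thesis"
    show False
    proof (cases "{b\<in>A. a < b} = {}")
      case True
      hence "A = insert a {b\<in>A. b<a}" using aA by fastforce
      hence "sum len A = sum len {b\<in>A. b<a} + len a"
        using fin by (metis (no_types, lifting) add.commute finite_insert mem_Collect_eq
            order_less_irrefl sum.insert finite_subset subsetI)
      thus False using H x by linarith
    next
      case False
      define b where "b = Min {b\<in>A. a < b}"
      have bin: "b \<in> {b\<in>A. a < b}" unfolding b_def using False fin by (intro Min_in) auto
      have "{y\<in>A. y<b} = insert a {y\<in>A. y<a}"
      proof (rule set_eqI, rule iffI)
        fix y assume "y \<in> {y\<in>A. y<b}"
        hence "y \<in> A" "y < b" by auto
        moreover have "\<not> a < y"
        proof
          assume "a < y" hence "b \<le> y" using \<open>y\<in>A\<close> fin b_def by auto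
          thus False using \<open>y<b\<close> by auto
        qed
        ultimately show "y \<in> insert a {y\<in>A. y<a}" by auto
      next
        fix y assume "y \<in> insert a {y\<in>A. y<a}"
        thus "y \<in> {y\<in>A. y<b}" using bin aA by auto
      qed
      hence "sum len {y\<in>A. y<b} = sum len {y\<in>A. y<a} + len a"
        using fin by (simp add: sum.insert)
      hence "b \<in> B" using H bin unfolding B_def by auto
      hence "b \<le> a" using Bfin a_def by auto
      thus False using bin by auto
    qed
  qed
  thus ?thesis using aA ax unfolding subint_def by auto
qed

lemma st_reindex:
  assumes "bij_betw p A A" "a \<in> A"
  shows "sum len {b\<in>A. inv_into A p b < inv_into A p a} = sum (len \<circ> p) {i\<in>A. i < inv_into A p a}"
proof -
  have inj: "inj_on p A" using assms bij_betw_imp_inj_on by auto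
  have img: "p ` A = A" using bij_betw_imp_surj_on[OF assms(1)] .
  have "{b\<in>A. inv_into A p b < inv_into A p a} = p ` {i\<in>A. i < inv_into A p a}"
  proof (rule set_eqI, rule iffI)
    fix b assume "b \<in> {b\<in>A. inv_into A p b < inv_into A p a}"
    moreover hence "p (inv_into A p b) = b" "inv_into A p b \<in> A"
      using img by (auto intro: f_inv_into_f inv_into_into)
    ultimately show "b \<in> p ` {i\<in>A. i < inv_into A p a}" by force
  next
    fix b assume "b \<in> p ` {i\<in>A. i < inv_into A p a}"
    then obtain i where "i\<in>A" "i < inv_into A p a" "b = p i" by auto
    thus "b \<in> {b\<in>A. inv_into A p b < inv_into A p a}" using inj img by auto
  qed
  moreover have "inj_on p {i\<in>A. i < inv_into A p a}" using inj by (auto intro: inj_on_subset)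
  ultimately show ?thesis by (simp add: sum.reindex)
qed

lemma st_le:
  fixes len :: "'a::linorder \<Rightarrow> real"
  assumes "finite A" "\<forall>a\<in>A. len a > 0" "a \<in> A"
  shows "sum len {b\<in>A. inv_into A p b < inv_into A p a} + len a \<le> sum len A"
proof -
  have "sum len {b\<in>A. inv_into A p b < inv_into A p a} + len a
     = sum len (insert a {b\<in>A. inv_into A p b < inv_into A p a})"
    using assms(1) by (subst sum.insert) auto
  also have "\<dots> \<le> sum len A"
    by (rule sum_mono2) (use assms in auto)
  finally show ?thesis .
qed



locale P44 =
  fixes A :: "'a::linorder set" and len :: "'a \<Rightarrow> real" and p :: "'a \<Rightarrow> 'a" and l :: real
    and a1 A' l' p'
  assumes data: "iet_data A len p"
    and a1_def: "a1 = Min A"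
    and eq_len: "len a1 = len (p a1)"
    and neq: "a1 \<noteq> p a1"
    and A'_def: "A' = A - {a1}"
    and l'_def: "l' = l + len a1"
    and p'_def: "p' = (\<lambda>a. if a = inv_into A p a1 then p a1 else p a)"
begin

lemma fin: "finite A" and ne: "A \<noteq> {}" and pos: "\<forall>a\<in>A. len a > 0" and bij: "bij_betw p A A"
  using data unfolding iet_data_def by auto

lemma inj: "inj_on p A" using bij bij_betw_imp_inj_on by auto
lemma img: "p ` A = A" using bij_betw_imp_surj_on[OF bij] .

lemma a1A: "a1 \<in> A" using fin ne a1_def by auto
lemma a1_min: "b \<in> A \<Longrightarrow> a1 \<le> b" using fin a1_def by auto

lemma q_in: "b \<in> A \<Longrightarrow> inv_into A p b \<in> A" using img by (metis inv_into_into)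
lemma p_q: "b \<in> A \<Longrightarrow> p (inv_into A p b) = b" using img by (metis f_inv_into_f)
lemma q_p: "b \<in> A \<Longrightarrow> inv_into A p (p b) = b" using inj by simp

lemma cA: "p a1 \<in> A" using a1A img by auto
lemma jA: "inv_into A p a1 \<in> A" using q_in a1A by auto
lemma pj: "p (inv_into A p a1) = a1" using p_q a1A by auto
lemma ja1: "inv_into A p a1 \<noteq> a1" using pj neq by metis

lemma cA': "p a1 \<in> A'" using cA neq A'_def by auto
lemma jA': "inv_into A p a1 \<in> A'" using jA ja1 A'_def by auto

lemma finA': "finite A'" using fin A'_def by auto
lemma posA': "\<forall>a\<in>A'. len a > 0" using pos A'_def by auto

lemma p'_in: "b \<in> A' \<Longrightarrow> p' b \<in> A'"
  unfolding p'_def A'_def using cA neq q_p a1A inj img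
  by (auto simp: inj_on_eq_iff)

lemma p'_inj: "inj_on p' A'"
proof (rule inj_onI)
  fix x y assume x: "x \<in> A'" and y: "y \<in> A'" and e: "p' x = p' y"
  have xA: "x \<in> A" "x \<noteq> a1" and yA: "y \<in> A" "y \<noteq> a1" using x y A'_def by auto
  show "x = y"
  proof (cases "x = inv_into A p a1"; cases "y = inv_into A p a1")
    assume "x = inv_into A p a1" "y \<noteq> inv_into A p a1"
    hence "p a1 = p y" using e p'_def by auto
    thus ?thesis using inj a1A yA inj_on_eq_iff by metis
  next
    assume "x \<noteq> inv_into A p a1" "y = inv_into A p a1"
    hence "p a1 = p x" using e p'_def by auto
    thus ?thesis using inj a1A xA inj_on_eq_iff by metis
  next
    assume "x \<noteq> inv_into A p a1" "y \<noteq> inv_into A p a1"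
    hence "p x = p y" using e p'_def by auto
    thus ?thesis using inj xA yA inj_on_eq_iff by metis
  qed simp
qed

lemma p'_bij: "bij_betw p' A' A'"
proof -
  have "p' ` A' \<subseteq> A'" using p'_in by auto
  moreover have "card (p' ` A') = card A'" using p'_inj card_image by auto
  ultimately have "p' ` A' = A'" using finA' by (metis card_subset_eq)
  thus ?thesis using p'_inj by (simp add: bij_betw_def)
qed

lemma data': "iet_data A' len p'"
  unfolding iet_data_def using finA' posA' p'_bij cA' by auto

lemma q'_c: "inv_into A' p' (p a1) = inv_into A p a1"
  by (rule inv_into_f_eq[OF p'_inj jA']) (simp add: p'_def)

lemma q'_other: "b \<in> A' \<Longrightarrow> b \<noteq> p a1 \<Longrightarrow> inv_into A' p' b = inv_into A p b"
proof (rule inv_into_f_eq[OF p'_inj])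
  assume b: "b \<in> A'" "b \<noteq> p a1"
  hence bA: "b \<in> A" "b \<noteq> a1" using A'_def by auto
  have "inv_into A p b \<noteq> inv_into A p a1" using bA p_q a1A by metis
  moreover have "inv_into A p b \<noteq> a1" using b p_q bA by metis
  ultimately show "inv_into A p b \<in> A'" "p' (inv_into A p b) = b"
    using q_in bA p_q A'_def p'_def by auto
qed

lemma lenp': "i \<in> A' \<Longrightarrow> len (p' i) = len (p i)"
  unfolding p'_def using pj eq_len by auto

lemma lt': "a \<in> A' \<Longrightarrow> sum len {b\<in>A'. b<a} = sum len {b\<in>A. b<a} - len a1"
proof -
  assume a: "a \<in> A'"
  hence "{b\<in>A. b<a} = insert a1 {b\<in>A'. b<a}" using A'_def a1A a1_min
    by (auto simp: order.order_iff_strict)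
  moreover have "a1 \<notin> {b\<in>A'. b<a}" using A'_def by auto
  ultimately show ?thesis using finA' by (simp add: sum.insert)
qed

lemma lt_a1: "sum len {b\<in>A. b<a1} = 0"
proof -
  have e: "{b\<in>A. b<a1} = {}" using a1_min by force
  show ?thesis by (simp only: e sum.empty)
qed

lemma st_split: "x \<in> A \<Longrightarrow> a1 < x \<Longrightarrow>
   sum (len \<circ> p) {i\<in>A. i < x} = sum (len \<circ> p) {i\<in>A'. i < x} + len a1"
proof -
  assume x: "x \<in> A" "a1 < x"
  hence "{i\<in>A. i<x} = insert a1 {i\<in>A'. i<x}" using A'_def a1A by auto
  moreover have "a1 \<notin> {i\<in>A'. i<x}" using A'_def by auto
  ultimately show ?thesis using finA' eq_len by (simp add: sum.insert)
qed

lemma st'_eq: "x \<in> A' \<Longrightarrow> sum (len \<circ> p') {i\<in>A'. i < x} = sum (len \<circ> p) {i\<in>A'. i < x}"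
  by (rule sum.cong) (auto simp: lenp')

lemma tau1: "a \<in> A' \<Longrightarrow> a \<noteq> p a1 \<Longrightarrow> tau A' len p' a = tau A len p a"
proof -
  assume a: "a \<in> A'" "a \<noteq> p a1"
  hence aA: "a \<in> A" using A'_def by auto
  have qa: "inv_into A p a \<in> A" "inv_into A p a \<noteq> a1" using q_in aA p_q a by metis+
  hence "a1 < inv_into A p a" using a1_min order.order_iff_strict by metis
  moreover have qa': "inv_into A p a \<in> A'" using qa A'_def by auto
  ultimately have s: "sum (len \<circ> p) {i\<in>A. i < inv_into A p a} = sum (len \<circ> p) {i\<in>A'. i < inv_into A p a} + len a1"
    using st_split[OF qa(1)] by simp
  have "sum len {b\<in>A'. inv_into A' p' b < inv_into A' p' a} = sum (len \<circ> p') {i\<in>A'. i < inv_into A' p' a}"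
    using st_reindex[OF p'_bij a(1)] .
  also have "\<dots> = sum (len \<circ> p) {i\<in>A'. i < inv_into A p a}"
    using q'_other[OF a] st'_eq[OF qa'] by simp
  finally show ?thesis unfolding tau_def
    using st_reindex[OF bij aA, of len] lt'[OF a(1)] s by simp
qed

lemma tau2: "tau A' len p' (p a1) = tau A len p (p a1) + tau A len p a1"
proof -
  have "a1 < inv_into A p a1" using a1_min jA ja1 order.order_iff_strict by metis
  hence s: "sum (len \<circ> p) {i\<in>A. i < inv_into A p a1} = sum (len \<circ> p) {i\<in>A'. i < inv_into A p a1} + len a1"
    using st_split[OF jA] by simp
  have e: "{i\<in>A. i < a1} = {}" using a1_min by force
  have z: "sum (len \<circ> p) {i\<in>A. i < a1} = 0" by (simp only: e sum.empty)
  have "sum len {b\<in>A'. inv_into A' p' b < inv_into A' p' (p a1)} = sum (len \<circ> p') {i\<in>A'. i < inv_into A' p' (p a1)}"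
    using st_reindex[OF p'_bij cA'] .
  also have "\<dots> = sum (len \<circ> p) {i\<in>A'. i < inv_into A p a1}"
    using q'_c st'_eq[OF jA'] by simp
  finally show ?thesis unfolding tau_def
    using st_reindex[OF bij cA, of len] st_reindex[OF bij a1A, of len] lt'[OF cA'] s z q_p[OF a1A] lt_a1 by simp
qed

end


context P44 begin

abbreviation "T \<equiv> iet A len p l"
abbreviation "S \<equiv> iet A' len p' l'"
abbreviation "I' \<equiv> {l'..<l + sum len A}"

lemma subint_eq: "a \<in> A' \<Longrightarrow> subint A' len l' a = subint A len l a"
  unfolding subint_def using lt' l'_def by simp

lemma right_eq: "l' + sum len A' = l + sum len A"
  using sum.remove[OF fin a1A, of len] l'_def A'_def by simp

lemma subint_a1: "subint A len l a1 = {l..<l'}"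
  unfolding subint_def using lt_a1 l'_def by simp

lemma letter': "y \<in> I' \<Longrightarrow> \<exists>b\<in>A'. y \<in> subint A len l b"
proof -
  assume y: "y \<in> I'"
  have "A' \<noteq> {}" using cA' by auto
  then obtain b where "b \<in> A'" "y \<in> subint A' len l' b"
    using subint_cover[OF finA' _ posA', of l' y] y right_eq by auto
  thus ?thesis using subint_eq by auto
qed

lemma image_bounds: "a \<in> A \<Longrightarrow> x \<in> subint A len l a \<Longrightarrow>
   l + sum len {b\<in>A. inv_into A p b < inv_into A p a} \<le> T x \<and>
   T x < l + sum len {b\<in>A. inv_into A p b < inv_into A p a} + len a"
  using iet_eq[OF fin pos] unfolding subint_def tau_def by auto

lemma st_ge: "a \<in> A \<Longrightarrow> a \<noteq> p a1 \<Longrightarrow> len a1 \<le> sum len {b\<in>A. inv_into A p b < inv_into A p a}"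
proof -
  assume a: "a \<in> A" "a \<noteq> p a1"
  have qa: "inv_into A p a \<in> A" "inv_into A p a \<noteq> a1" using q_in a p_q by metis+
  hence "a1 < inv_into A p a" using a1_min order.order_iff_strict by metis
  hence "(len \<circ> p) a1 \<le> sum (len \<circ> p) {i\<in>A. i < inv_into A p a}"
    using fin a1A pos img by (intro member_le_sum) (auto intro!: less_imp_le)
  thus ?thesis using st_reindex[OF bij a(1), of len] eq_len by simp
qed

lemma st_c: "sum len {b\<in>A. inv_into A p b < inv_into A p (p a1)} = 0"
proof -
  have e: "{i\<in>A. i < a1} = {}" using a1_min by force
  have z: "sum (len \<circ> p) {i\<in>A. i < a1} = 0" by (simp only: e sum.empty)
  thus ?thesis using st_reindex[OF bij cA, of len] q_p[OF a1A] by simp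
qed

lemma step_other:
  assumes y: "y \<in> I'" and b: "b \<in> A'" "b \<noteq> p a1" and yb: "y \<in> subint A len l b"
  shows "T y = S y \<and> T y \<in> I'"
proof -
  have bA: "b \<in> A" using b A'_def by auto
  have "T y = y + tau A len p b" using iet_eq[OF fin pos bA yb] .
  moreover have "S y = y + tau A' len p' b" using iet_eq[OF finA' posA' b(1)] yb subint_eq[OF b(1)] by simp
  moreover have "T y \<in> I'" using image_bounds[OF bA yb] st_ge[OF bA b(2)] st_le[OF fin pos bA, of p] l'_def
    by auto
  ultimately show ?thesis using tau1[OF b] by simp
qed

lemma step_c:
  assumes y: "y \<in> I'" and yb: "y \<in> subint A len l (p a1)"
  shows "T y \<in> subint A len l a1 \<and> T y \<notin> I' \<and> T (T y) = S y \<and> S y \<in> I'"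
proof -
  have ty: "T y = y + tau A len p (p a1)" using iet_eq[OF fin pos cA yb] .
  have b1: "l \<le> T y \<and> T y < l + len (p a1)" using image_bounds[OF cA yb] st_c by simp
  hence ta1: "T y \<in> subint A len l a1" using subint_a1 eq_len l'_def by simp
  have tty: "T (T y) = T y + tau A len p a1" using iet_eq[OF fin pos a1A ta1] .
  have sy: "S y = y + tau A' len p' (p a1)" using iet_eq[OF finA' posA' cA'] yb subint_eq[OF cA'] by simp
  have "T (T y) \<in> I'" using image_bounds[OF a1A ta1] st_ge[OF a1A neq] st_le[OF fin pos a1A, of p] l'_def
    by auto
  moreover have "T (T y) = S y" using tty ty sy tau2 by simp
  ultimately show ?thesis using ta1 b1 eq_len l'_def by auto
qed

lemma step:
  assumes y: "y \<in> I'"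
  shows "S y \<in> I'"
proof -
  obtain b where b: "b \<in> A'" "y \<in> subint A len l b" using letter'[OF y] by auto
  show ?thesis
  proof (cases "b = p a1")
    case True thus ?thesis using step_c y b by auto
  next
    case False thus ?thesis using step_other y b by metis
  qed
qed

lemma Sn: "x \<in> I' \<Longrightarrow> (S ^^ n) x \<in> I'"
proof (induction n)
  case 0 thus ?case by simp
next
  case (Suc n)
  hence "S ((S ^^ n) x) \<in> I'" by (intro step)
  thus ?case by simp
qed

end


context P44 begin

lemma induced:
  assumes x: "x \<in> I'"
  shows "(\<exists>n>0. (T ^^ n) x \<in> I') \<and> induced_map T I' x = S x"
proof -
  obtain b where b: "b \<in> A'" "x \<in> subint A len l b" using letter'[OF x] by auto
  show ?thesis
  proof (cases "b = p a1")
    case True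
    hence h: "T x \<notin> I'" "T (T x) = S x" "S x \<in> I'" using step_c x b by auto
    have "return_time T I' x = 2" unfolding return_time_def
    proof (rule Least_equality)
      show "0 < (2::nat) \<and> (T ^^ 2) x \<in> I'" using h by (simp add: numeral_2_eq_2)
    next
      fix y :: nat assume yy: "0 < y \<and> (T ^^ y) x \<in> I'"
      show "2 \<le> y"
      proof (rule ccontr)
        assume "\<not> 2 \<le> y"
        hence "y = 1" using yy by simp
        thus False using yy h(1) by simp
      qed
    qed
    moreover have "(T ^^ 2) x \<in> I'" using h by (simp add: numeral_2_eq_2)
    ultimately show ?thesis unfolding induced_map_def using h by (auto simp: numeral_2_eq_2 intro!: exI[of _ 2])
  next
    case False
    hence h: "T x = S x" "T x \<in> I'" using step_other x b by metis+
    have "return_time T I' x = 1" unfolding return_time_def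
    proof (rule Least_equality)
      show "0 < (1::nat) \<and> (T ^^ 1) x \<in> I'" using h by simp
    next
      fix y :: nat assume "0 < y \<and> (T ^^ y) x \<in> I'"
      thus "1 \<le> y" by simp
    qed
    thus ?thesis unfolding induced_map_def using h by (auto intro!: exI[of _ 1])
  qed
qed

lemma traj_main:
  assumes x: "x \<in> I'" and phi_def: "phi = (\<lambda>c. if c = p a1 then [p a1, a1] else [c])"
  shows "traj A len p l x n = morph_inf phi (traj A' len p' l' x) n"
proof -
  let ?w = "traj A len p l x" and ?w' = "traj A' len p' l' x"
  let ?C = "\<lambda>n. concat (map (\<lambda>i. phi (?w' i)) [0..<n])"
  have main: "?C n = map ?w [0..<length (?C n)] \<and> (T ^^ length (?C n)) x = (S ^^ n) x
     \<and> n \<le> length (?C n)" for n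
  proof (induction n)
    case 0 thus ?case by simp
  next
    case (Suc n)
    define m where "m = length (?C n)"
    define y where "y = (S ^^ n) x"
    have y: "y \<in> I'" using Sn[OF x] y_def by simp
    obtain b where b: "b \<in> A'" "y \<in> subint A len l b" using letter'[OF y] by auto
    have bA: "b \<in> A" using b A'_def by auto
    have w'n: "?w' n = b" unfolding traj_def
      using the_letter[OF finA' posA' b(1)] b subint_eq[OF b(1)] y_def by simp
    have Tm: "(T ^^ m) x = y" using Suc m_def y_def by simp
    have wm: "?w m = b" unfolding traj_def using Tm the_letter[OF fin pos bA b(2)] by simp
    have Cs: "?C (Suc n) = ?C n @ phi b" using w'n by simp
    show ?case
    proof (cases "b = p a1")
      case True
      have h: "T y \<in> subint A len l a1" "T (T y) = S y" using step_c y b True by auto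
      have w1: "?w (Suc m) = a1" unfolding traj_def using Tm h the_letter[OF fin pos a1A h(1)] by simp
      have pb: "phi b = [b, a1]" using True phi_def by simp
      have len: "length (?C (Suc n)) = Suc (Suc m)" using Cs pb m_def by simp
      have "map ?w [0..<Suc (Suc m)] = map ?w [0..<m] @ [b, a1]" using wm w1 by simp
      hence "?C (Suc n) = map ?w [0..<length (?C (Suc n))]" using len Cs pb Suc m_def by simp
      moreover have "(T ^^ length (?C (Suc n))) x = (S ^^ Suc n) x"
        using len Tm h y_def by simp
      ultimately show ?thesis using len Suc m_def by simp
    next
      case False
      have h: "T y = S y" using step_other y b False by metis
      have pb: "phi b = [b]" using False phi_def by simp
      have len: "length (?C (Suc n)) = Suc m" using Cs pb m_def by simp
      have "map ?w [0..<Suc m] = map ?w [0..<m] @ [b]" using wm by simp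
      hence "?C (Suc n) = map ?w [0..<length (?C (Suc n))]" using len Cs pb Suc m_def by simp
      moreover have "(T ^^ length (?C (Suc n))) x = (S ^^ Suc n) x"
        using len Tm h y_def by simp
      ultimately show ?thesis using len Suc m_def by simp
    qed
  qed
  have "morph_inf phi ?w' n = ?C (Suc n) ! n" unfolding morph_inf_def by (simp add: comp_def)
  also have "\<dots> = map ?w [0..<length (?C (Suc n))] ! n" using main[of "Suc n"] by metis
  also have "\<dots> = ?w n" using main[of "Suc n"] by (simp add: nth_map_upt)
  finally show ?thesis by simp
qed

end

theorem proposition4p4:
  fixes A :: "'a::linorder set" and len :: "'a \<Rightarrow> real" and p :: "'a \<Rightarrow> 'a" and l :: real
  assumes data: "iet_data A len p"
    and a1_def: "a1 = Min A"
    and eq_len: "len a1 = len (p a1)"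
    and neq: "a1 \<noteq> p a1"
    and A'_def: "A' = A - {a1}"
    and l'_def: "l' = l + len a1"
    and p'_def: "p' = (\<lambda>a. if a = inv_into A p a1 then p a1 else p a)"
    and phi_def: "phi = (\<lambda>c. if c = p a1 then [p a1, a1] else [c])"
  shows "iet_data A' len p'
     \<and> iet_right A' len l' = iet_right A len l
     \<and> (\<forall>a\<in>A'. subint A' len l' a = subint A len l a)
     \<and> (\<forall>x\<in>{l'..<iet_right A len l}.
          (\<exists>n>0. (iet A len p l ^^ n) x \<in> {l'..<iet_right A len l})
        \<and> induced_map (iet A len p l) {l'..<iet_right A len l} x = iet A' len p' l' x)
     \<and> (\<forall>x\<in>{l'..<iet_right A len l}.
          traj A len p l x = morph_inf phi (traj A' len p' l' x))"
proof -
  interpret P44 A len p l a1 A' l' p'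
    using data a1_def eq_len neq A'_def l'_def p'_def by unfold_locales
  show ?thesis
    unfolding iet_right_def
    using data' right_eq subint_eq induced traj_main[OF _ phi_def] by auto
qed

end
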